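(* Suppose $\|\phi_0\|_{L^2(P_0;\mathcal{H})}<\infty$ and $\|\phi_n^j-\phi_0\|_{L^2(P_0;\mathcal{H})}=o_p(1)$ for each $j\in\{1,2\}$. Let $\Sigma_n:\mathcal{H}\to\mathcal{H}$ be $\Sigma_n(h)=\frac12\sum_{j=1}^2E_{P_n^j}[\langle h,\phi_n^j(Z)\rangle_{\mathcal{H}}\phi_n^j(Z)]$ and $\Sigma_0(h)=E_0[\langle h,\phi_0(Z)\rangle_{\mathcal{H}}\phi_0(Z)]$. Then $\|\Sigma_n-\Sigma_0\|_{\mathrm{op}}=o_p(1)$.
   Context: $(\mathcal{Z},\mathbf{B})$ is a Polish space, $\mathcal{H}$ a real separable Hilbert space, $P_0$ a distribution on $\mathcal{Z}$, $\phi_0:\mathcal{Z}\to\mathcal{H}$ Bochner measurable (in the paper, the efficient influence function of a pathwise differentiable parameter at $P_0$, so that $\Sigma_0$ is the covariance operator of the associated Gaussian limit). $L^2(P;\mathcal{H})$-norm: $\|f\|^2=\int\|f\|_{\mathcal{H}}^2dP$. Cross-fitting: $n$ even, $Z_1,\dots,Z_n$ iid $P_0$; $P_n^1$ is the empirical distribution of $Z_{n/2+1},\dots,Z_n$ and $P_n^2$ that of $Z_1,\dots,Z_{n/2}$; $\phi_n^1:\mathcal{Z}\to\mathcal{H}$ is a (Bochner measurable) function determined by $Z_1,\dots,Z_{n/2}$ and $\phi_n^2$ one determined by $Z_{n/2+1},\dots,Z_n$ (in the paper, the efficient influence functions at estimates $\widehat{P}_n^j$ of $P_0$ fit on those halves).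 $\|\cdot\|_{\mathrm{op}}$ is the operator norm. *)

theory Defs
  imports "HOL-Probability.Probability"
begin

definition outer_prob :: "'a measure \<Rightarrow> 'a set \<Rightarrow> real" where
  "outer_prob M A = Inf {measure M B | B. B \<in> sets M \<and> A \<subseteq> B}"

text \<open>X m = o_p(1) as m tends to infinity (for [0,\<infinity>]-valued random quantities),
  using outer probability so that no measurability is presupposed.\<close>
definition op_one :: "'a measure \<Rightarrow> (nat \<Rightarrow> 'a \<Rightarrow> ennreal) \<Rightarrow> bool" where
  "op_one M X \<longleftrightarrow>
     (\<forall>e::real. e > 0 \<longrightarrow>
        (\<lambda>m. outer_prob M {\<omega> \<in> space M. ennreal e < X m \<omega>}) \<longlonglongrightarrow> 0)"

definition L2norm :: "'z measure \<Rightarrow> ('z \<Rightarrow> 'h::real_normed_vector) \<Rightarrow> ennreal" where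
  "L2norm P f = (let I = (\<integral>\<^sup>+ z. ennreal ((norm (f z))\<^sup>2) \<partial>P)
                  in if I = \<infinity> then \<infinity> else ennreal (sqrt (enn2real I)))"

text \<open>Cross-fitted covariance operator estimate with sample size n = 2m.
  P_n^1 = empirical distribution of the second half, P_n^2 of the first half.\<close>
definition Sigma_n :: "nat \<Rightarrow> (nat \<Rightarrow> nat \<Rightarrow> (nat \<Rightarrow> 'z) \<Rightarrow> 'z \<Rightarrow> 'h::real_inner)
                        \<Rightarrow> (nat \<Rightarrow> 'z) \<Rightarrow> 'h \<Rightarrow> 'h" where
  "Sigma_n m phi x h =
     (1/2) *\<^sub>R
       ( (1 / real m) *\<^sub>R (\<Sum>i\<in>{m..<2*m}. (inner h (phi m 1 x (x i))) *\<^sub>R phi m 1 x (x i))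
       + (1 / real m) *\<^sub>R (\<Sum>i\<in>{0..<m}. (inner h (phi m 2 x (x i))) *\<^sub>R phi m 2 x (x i)))"

definition Sigma_0 :: "'z measure \<Rightarrow> ('z \<Rightarrow> 'h::{real_inner,banach,second_countable_topology}) \<Rightarrow> 'h \<Rightarrow> 'h" where
  "Sigma_0 P phi0 h = (\<integral> z. (inner h (phi0 z)) *\<^sub>R phi0 z \<partial>P)"

end

theory Submission
  imports Defs
begin


lemma key_indep:
  fixes M :: "'z measure" and F :: "(nat \<Rightarrow> 'z) \<times> 'z \<Rightarrow> ennreal"
  assumes M: "prob_space M"
    and iJ: "i \<notin> J"
    and F[measurable]: "F \<in> borel_measurable (PiM UNIV (\<lambda>_. M) \<Otimes>\<^sub>M M)"
    and dep: "\<And>x y z. (\<forall>k\<in>J. x k = y k) \<Longrightarrow> F (x, z) = F (y, z)"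
  shows "(\<integral>\<^sup>+ x. F (x, x i) \<partial>PiM UNIV (\<lambda>_. M)) = (\<integral>\<^sup>+ x. (\<integral>\<^sup>+ z. F (x, z) \<partial>M) \<partial>PiM UNIV (\<lambda>_. M))"
proof -
  let ?P = "PiM (UNIV::nat set) (\<lambda>_. M)"
  interpret P: prob_space ?P using M by (intro prob_space_PiM) auto
  interpret M: prob_space M by fact
  interpret pair_sigma_finite M ?P by unfold_locales
  have D: "distr (M \<Otimes>\<^sub>M ?P) ?P (\<lambda>(z, X). X(i := z)) = ?P"
    using distr_pair_PiM_eq_PiM[of UNIV "\<lambda>_. M" i] M by simp
  have mupd: "(\<lambda>(z, X). X(i := z)) \<in> measurable (M \<Otimes>\<^sub>M ?P) ?P"
    using measurable_fun_upd[of UNIV UNIV i snd "M \<Otimes>\<^sub>M ?P" "\<lambda>_. M" fst]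
    by (simp add: case_prod_beta')
  have "(\<integral>\<^sup>+ x. F (x, x i) \<partial>?P) = (\<integral>\<^sup>+ x. F (x, x i) \<partial>distr (M \<Otimes>\<^sub>M ?P) ?P (\<lambda>(z, X). X(i := z)))"
    by (simp add: D)
  also have "\<dots> = (\<integral>\<^sup>+ p. F ((snd p)(i := fst p), fst p) \<partial>(M \<Otimes>\<^sub>M ?P))"
    by (subst nn_integral_distr[OF mupd]) (auto simp: case_prod_beta')
  also have "\<dots> = (\<integral>\<^sup>+ p. F (snd p, fst p) \<partial>(M \<Otimes>\<^sub>M ?P))"
    using iJ by (intro nn_integral_cong) (metis dep fun_upd_other)
  also have "\<dots> = (\<integral>\<^sup>+ X. (\<integral>\<^sup>+ z. F (X, z) \<partial>M) \<partial>?P)"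
    by (subst nn_integral_snd[symmetric]) (auto simp: case_prod_beta')
  finally show ?thesis .
qed

lemma key_avg:
  fixes M :: "'z measure" and G :: "(nat \<Rightarrow> 'z) \<Rightarrow> 'z \<Rightarrow> real"
  assumes M: "prob_space M"
    and I: "finite I" "I \<inter> J = {}" and Ine: "I \<noteq> {}"
    and G[measurable]: "(\<lambda>(x, z). G x z) \<in> borel_measurable (PiM UNIV (\<lambda>_. M) \<Otimes>\<^sub>M M)"
    and Gnn: "\<And>x z. 0 \<le> G x z"
    and dep: "\<And>x y. (\<forall>k\<in>J. x k = y k) \<Longrightarrow> G x = G y"
  shows "(\<integral>\<^sup>+ x. ennreal ((1 / real (card I)) * (\<Sum>i\<in>I. G x (x i))) \<partial>PiM UNIV (\<lambda>_. M))
       = (\<integral>\<^sup>+ x. (\<integral>\<^sup>+ z. ennreal (G x z) \<partial>M) \<partial>PiM UNIV (\<lambda>_. M))"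
proof -
  let ?P = "PiM (UNIV::nat set) (\<lambda>_. M)"
  interpret P: prob_space ?P using M by (intro prob_space_PiM) auto
  have Gm: "(\<lambda>x. G x (x i)) \<in> borel_measurable ?P" for i
  proof -
    have "(\<lambda>(x, z). G x z) \<circ> (\<lambda>x. (x, x i)) \<in> borel_measurable ?P"
      by (rule measurable_comp[OF _ G]) measurable
    thus ?thesis by (simp add: comp_def)
  qed
  have each: "(\<integral>\<^sup>+ x. ennreal (G x (x i)) \<partial>?P) = (\<integral>\<^sup>+ x. (\<integral>\<^sup>+ z. ennreal (G x z) \<partial>M) \<partial>?P)"
    if "i \<in> I" for i
  proof -
    have "(\<lambda>p. ennreal (G (fst p) (snd p))) \<in> borel_measurable (?P \<Otimes>\<^sub>M M)"
      using G by (simp add: case_prod_beta')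
    moreover have "i \<notin> J" using that I by auto
    moreover have "\<And>x y z. (\<forall>k\<in>J. x k = y k) \<Longrightarrow> ennreal (G (fst (x, z)) (snd (x, z))) = ennreal (G (fst (y, z)) (snd (y, z)))"
      using dep by (simp only: fst_conv snd_conv)
    ultimately show ?thesis
      using key_indep[OF M, of i J "\<lambda>p. ennreal (G (fst p) (snd p))"] by simp
  qed
  show ?thesis
  proof -
    have cI: "card I > 0" using I Ine by (simp add: card_gt_0_iff)
    have "(\<integral>\<^sup>+ x. ennreal ((1 / real (card I)) * (\<Sum>i\<in>I. G x (x i))) \<partial>?P)
        = (\<integral>\<^sup>+ x. ennreal (1 / real (card I)) * (\<Sum>i\<in>I. ennreal (G x (x i))) \<partial>?P)"
      using Gnn by (intro nn_integral_cong) (simp add: ennreal_mult[symmetric] sum_nonneg)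
    also have "\<dots> = ennreal (1 / real (card I)) * (\<Sum>i\<in>I. (\<integral>\<^sup>+ x. ennreal (G x (x i)) \<partial>?P))"
      using Gm by (simp add: nn_integral_cmult nn_integral_sum)
    also have "\<dots> = ennreal (1 / real (card I)) * (\<Sum>i\<in>I. (\<integral>\<^sup>+ x. (\<integral>\<^sup>+ z. ennreal (G x z) \<partial>M) \<partial>?P))"
      using each by simp
    also have "\<dots> = (\<integral>\<^sup>+ x. (\<integral>\<^sup>+ z. ennreal (G x z) \<partial>M) \<partial>?P)"
    proof -
      have "ennreal (1 / real (card I)) * of_nat (card I) = 1"
        using cI by (simp add: ennreal_of_nat_eq_real_of_nat ennreal_mult[symmetric])
      thus ?thesis by (simp add: mult.assoc[symmetric])
    qed
    finally show ?thesis .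
  qed
qed

lemma markov_real:
  fixes g :: "'a \<Rightarrow> real"
  assumes M: "prob_space M" and g[measurable]: "g \<in> borel_measurable M"
    and gnn: "\<And>x. 0 \<le> g x" and le: "(\<integral>\<^sup>+ x. ennreal (g x) \<partial>M) \<le> ennreal r"
    and r: "0 \<le> r" and c: "0 < c"
  shows "measure M {x\<in>space M. c < g x} \<le> r / c"
proof -
  interpret prob_space M by fact
  have "emeasure M {x\<in>space M. c < g x} \<le> emeasure M {x\<in>space M. 1 \<le> ennreal (1/c) * ennreal (g x)}"
    using c gnn by (intro emeasure_mono) (auto simp: ennreal_mult[symmetric] field_simps)
  also have "\<dots> \<le> ennreal (1/c) * (\<integral>\<^sup>+ x. ennreal (g x) * indicator (space M) x \<partial>M)"
    by (rule nn_integral_Markov_inequality) auto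
  also have "(\<integral>\<^sup>+ x. ennreal (g x) * indicator (space M) x \<partial>M) = (\<integral>\<^sup>+ x. ennreal (g x) \<partial>M)"
    by (intro nn_integral_cong) auto
  also have "ennreal (1/c) * \<dots> \<le> ennreal (1/c) * ennreal r"
    by (intro mult_left_mono le) auto
  also have "\<dots> = ennreal (r / c)" using c r by (simp add: ennreal_mult[symmetric])
  finally show ?thesis using c r by (simp add: emeasure_eq_measure)
qed

lemma cross_bound:
  fixes M :: "'z measure" and G :: "(nat \<Rightarrow> 'z) \<Rightarrow> 'z \<Rightarrow> real"
  assumes M: "prob_space M"
    and I: "finite I" "I \<inter> J = {}" and Ine: "I \<noteq> {}"
    and G[measurable]: "(\<lambda>(x, z). G x z) \<in> borel_measurable (PiM UNIV (\<lambda>_. M) \<Otimes>\<^sub>M M)"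
    and Gnn: "\<And>x z. 0 \<le> G x z"
    and dep: "\<And>x y. (\<forall>k\<in>J. x k = y k) \<Longrightarrow> G x = G y"
    and c: "0 < c" and d: "0 \<le> d" and sp: "space M = UNIV"
  shows "measure (PiM UNIV (\<lambda>_. M)) {x\<in>space (PiM UNIV (\<lambda>_. M)). c < (1 / real (card I)) * (\<Sum>i\<in>I. G x (x i))}
     \<le> measure (PiM UNIV (\<lambda>_. M)) {x\<in>space (PiM UNIV (\<lambda>_. M)). ennreal d < (\<integral>\<^sup>+ z. ennreal (G x z) \<partial>M)} + d / c"
proof -
  let ?P = "PiM (UNIV::nat set) (\<lambda>_. M)"
  interpret P: prob_space ?P using M by (intro prob_space_PiM) auto
  interpret M: prob_space M by fact
  define N where "N x = (\<integral>\<^sup>+ z. ennreal (G x z) \<partial>M)" for x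
  have Nm[measurable]: "N \<in> borel_measurable ?P"
  proof -
    have "(\<lambda>p. ennreal (G (fst p) (snd p))) \<in> borel_measurable (?P \<Otimes>\<^sub>M M)"
      using G by (simp add: case_prod_beta')
    from M.borel_measurable_nn_integral_fst[OF this] show ?thesis unfolding N_def by simp
  qed
  define G' where "G' x z = G x z * indicator {x\<in>space ?P. N x \<le> ennreal d} x" for x z
  have Bm[measurable]: "{x\<in>space ?P. N x \<le> ennreal d} \<in> sets ?P"
    by measurable
  have G'm: "(\<lambda>(x, z). G' x z) \<in> borel_measurable (?P \<Otimes>\<^sub>M M)"
    unfolding G'_def by measurable
  have G'nn: "\<And>x z. 0 \<le> G' x z" using Gnn by (simp add: G'_def)
  have spP: "space ?P = UNIV" by (simp add: space_PiM sp)
  have Ndep: "N x = N y" if "\<forall>k\<in>J. x k = y k" for x y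
    using dep[OF that] by (simp add: N_def)
  have dep': "\<And>x y. (\<forall>k\<in>J. x k = y k) \<Longrightarrow> G' x = G' y"
  proof -
    fix x y :: "nat \<Rightarrow> 'z" assume h: "\<forall>k\<in>J. x k = y k"
    show "G' x = G' y" unfolding G'_def using dep[OF h] Ndep[OF h] by (simp add: spP indicator_def)
  qed
  have eq: "(\<integral>\<^sup>+ x. ennreal ((1 / real (card I)) * (\<Sum>i\<in>I. G' x (x i))) \<partial>?P)
       = (\<integral>\<^sup>+ x. (\<integral>\<^sup>+ z. ennreal (G' x z) \<partial>M) \<partial>?P)"
    by (rule key_avg[OF M I Ine G'm G'nn dep'])
  also have "\<dots> = (\<integral>\<^sup>+ x. N x * indicator {x\<in>space ?P. N x \<le> ennreal d} x \<partial>?P)"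
    unfolding G'_def N_def
    by (intro nn_integral_cong) (auto simp: indicator_def)
  also have "\<dots> \<le> (\<integral>\<^sup>+ x. ennreal d \<partial>?P)"
  proof -
    have pw: "\<And>x. N x * indicator {x\<in>space ?P. N x \<le> ennreal d} x \<le> ennreal d"
      by (simp split: split_indicator)
    show ?thesis
      using nn_integral_mono[of ?P "\<lambda>x. N x * indicator {x\<in>space ?P. N x \<le> ennreal d} x" "\<lambda>x. ennreal d"] pw
      by blast
  qed
  also have "\<dots> = ennreal d" by (simp add: P.emeasure_space_1)
  finally have le: "(\<integral>\<^sup>+ x. ennreal ((1 / real (card I)) * (\<Sum>i\<in>I. G' x (x i))) \<partial>?P) \<le> ennreal d" .
  have avgm: "(\<lambda>x. (1 / real (card I)) * (\<Sum>i\<in>I. G' x (x i))) \<in> borel_measurable ?P"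
  proof -
    have "(\<lambda>x. G' x (x i)) \<in> borel_measurable ?P" for i
    proof -
      have "(\<lambda>(x, z). G' x z) \<circ> (\<lambda>x. (x, x i)) \<in> borel_measurable ?P"
        by (rule measurable_comp[OF _ G'm]) measurable
      thus ?thesis by (simp add: comp_def)
    qed
    thus ?thesis by measurable
  qed
  have m2: "measure ?P {x\<in>space ?P. c < (1 / real (card I)) * (\<Sum>i\<in>I. G' x (x i))} \<le> d / c"
    by (rule markov_real[OF P.prob_space_axioms avgm _ le d c])
       (simp add: G'nn sum_nonneg)
  have sub: "{x\<in>space ?P. c < (1 / real (card I)) * (\<Sum>i\<in>I. G x (x i))} \<subseteq>
     {x\<in>space ?P. ennreal d < N x} \<union> {x\<in>space ?P. c < (1 / real (card I)) * (\<Sum>i\<in>I. G' x (x i))}"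
    by (auto simp: G'_def indicator_def not_less)
  have "measure ?P {x\<in>space ?P. c < (1 / real (card I)) * (\<Sum>i\<in>I. G x (x i))} \<le>
     measure ?P ({x\<in>space ?P. ennreal d < N x} \<union> {x\<in>space ?P. c < (1 / real (card I)) * (\<Sum>i\<in>I. G' x (x i))})"
    using sub avgm by (intro P.finite_measure_mono) auto
  also have "\<dots> \<le> measure ?P {x\<in>space ?P. ennreal d < N x} + measure ?P {x\<in>space ?P. c < (1 / real (card I)) * (\<Sum>i\<in>I. G' x (x i))}"
    using avgm by (intro measure_Un_le) auto
  finally show ?thesis using m2 unfolding N_def by simp
qed

lemma freq_cheb:
  fixes M :: "'z measure" and I :: "nat set"
  assumes M: "prob_space M" and A[measurable]: "A \<in> sets M"
    and I: "finite I" "I \<noteq> {}" and eta: "0 < \<eta>"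
  shows "measure (PiM UNIV (\<lambda>_. M)) {x\<in>space (PiM UNIV (\<lambda>_. M)).
            \<eta> < \<bar>(1 / real (card I)) * (\<Sum>i\<in>I. indicator A (x i)) - measure M A\<bar>}
         \<le> 1 / (real (card I) * \<eta>\<^sup>2)"
proof -
  let ?P = "PiM (UNIV::nat set) (\<lambda>_. M)"
  interpret P: prob_space ?P using M by (intro prob_space_PiM) auto
  interpret M: prob_space M by fact
  define p where "p = measure M A"
  define a where "a i x = (indicator A (x i) :: real)" for i and x :: "nat \<Rightarrow> 'z"
  have am[measurable]: "a i \<in> borel_measurable ?P" for i unfolding a_def by measurable
  have p01: "0 \<le> p" "p \<le> 1" unfolding p_def by auto
  have single: "(\<integral>\<^sup>+ x. indicator A (x k) \<partial>?P) = ennreal p" for k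
  proof -
    have "(\<integral>\<^sup>+ x. (\<lambda>q. indicator A (snd q)) (x, x k) \<partial>?P)
        = (\<integral>\<^sup>+ x. (\<integral>\<^sup>+ z. (\<lambda>q. indicator A (snd q)) (x, z) \<partial>M) \<partial>?P)"
      by (rule key_indep[OF M, of k "{}"]) auto
    also have "\<dots> = ennreal p"
      by (simp add: P.emeasure_space_1 M.emeasure_eq_measure p_def)
    finally show ?thesis by simp
  qed
  have pair: "(\<integral>\<^sup>+ x. indicator A (x i) * indicator A (x k) \<partial>?P) = ennreal (p * p)" if "i \<noteq> k" for i k
  proof -
    have "(\<integral>\<^sup>+ x. (\<lambda>q. indicator A (fst q k) * indicator A (snd q)) (x, x i) \<partial>?P)
        = (\<integral>\<^sup>+ x. (\<integral>\<^sup>+ z. (\<lambda>q. indicator A (fst q k) * indicator A (snd q)) (x, z) \<partial>M) \<partial>?P)"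
      by (rule key_indep[OF M, of i "{k}"]) (use that in auto)
    also have "\<dots> = (\<integral>\<^sup>+ x. indicator A (x k) * ennreal p \<partial>?P)"
      by (intro nn_integral_cong) (simp add: nn_integral_cmult M.emeasure_eq_measure p_def)
    also have "\<dots> = ennreal p * ennreal p"
      by (simp add: nn_integral_multc single)
    finally show ?thesis by (simp add: mult.commute ennreal_mult p01)
  qed
  have Eaa: "integral\<^sup>L ?P (\<lambda>x. a i x * a k x) = (if i = k then p else p * p)" for i k
  proof -
    have "integral\<^sup>L ?P (\<lambda>x. a i x * a k x) = enn2real (\<integral>\<^sup>+ x. ennreal (a i x * a k x) \<partial>?P)"
      by (rule integral_eq_nn_integral) (auto simp: a_def)
    also have "(\<integral>\<^sup>+ x. ennreal (a i x * a k x) \<partial>?P) = (\<integral>\<^sup>+ x. indicator A (x i) * indicator A (x k) \<partial>?P)"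
      by (intro nn_integral_cong) (simp add: a_def split: split_indicator)
    moreover have "(\<lambda>x. indicator A (x k) * indicator A (x k) :: ennreal) = (\<lambda>x. indicator A (x k))"
      by (auto split: split_indicator)
    ultimately show ?thesis
      using single[of i] pair[of i k] p01
      by (cases "i = k") simp_all
  qed
  have Ea: "integral\<^sup>L ?P (a i) = p" for i
  proof -
    have "integral\<^sup>L ?P (a i) = enn2real (\<integral>\<^sup>+ x. ennreal (a i x) \<partial>?P)"
      by (rule integral_eq_nn_integral) (auto simp: a_def)
    also have "(\<integral>\<^sup>+ x. ennreal (a i x) \<partial>?P) = (\<integral>\<^sup>+ x. indicator A (x i) \<partial>?P)"
      by (intro nn_integral_cong) (simp add: a_def split: split_indicator)
    finally show ?thesis using single[of i] p01 by simp
  qed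
  have ia: "integrable ?P (a i)" for i
    by (rule P.integrable_const_bound[where B=1]) (auto simp: a_def)
  have iaa: "integrable ?P (\<lambda>x. a i x * a k x)" for i k
    by (rule P.integrable_const_bound[where B=1]) (auto simp: a_def split: split_indicator)
  have Ebb: "integral\<^sup>L ?P (\<lambda>x. (a i x - p) * (a k x - p)) = (if i = k then p - p * p else 0)" for i k
  proof -
    have "(\<lambda>x. (a i x - p) * (a k x - p)) = (\<lambda>x. a i x * a k x - p * a i x - p * a k x + p * p)"
      by (auto simp: algebra_simps)
    hence "integral\<^sup>L ?P (\<lambda>x. (a i x - p) * (a k x - p)) =
       integral\<^sup>L ?P (\<lambda>x. a i x * a k x) - p * integral\<^sup>L ?P (a i) - p * integral\<^sup>L ?P (a k) + p * p"
      using ia iaa by (simp add: P.prob_space)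
    thus ?thesis using Eaa[of i k] Ea[of i] Ea[of k] by auto
  qed
  define m where "m = real (card I)"
  have m: "0 < m" using I by (simp add: m_def card_gt_0_iff)
  define f where "f x = (1 / m) * (\<Sum>i\<in>I. a i x) - p" for x
  have f_eq: "f x = (1 / m) * (\<Sum>i\<in>I. (a i x - p))" for x
    using m by (simp add: f_def sum_subtractf m_def field_simps)
  have fm[measurable]: "f \<in> borel_measurable ?P" unfolding f_def by measurable
  have f2: "(\<lambda>x. (f x)\<^sup>2) = (\<lambda>x. (1 / m)\<^sup>2 * (\<Sum>i\<in>I. \<Sum>k\<in>I. (a i x - p) * (a k x - p)))"
    by (auto simp: f_eq power2_eq_square sum_product)
  have ibb: "integrable ?P (\<lambda>x. (a i x - p) * (a k x - p))" for i k
  proof (rule P.integrable_const_bound[where B=1])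
    have b1: "\<bar>a j x - p\<bar> \<le> 1" for j x using p01 by (auto simp: a_def split: split_indicator)
    show "AE x in ?P. norm ((a i x - p) * (a k x - p)) \<le> 1"
      using b1 by (auto simp: abs_mult intro!: mult_le_one)
  qed simp
  have if2: "integrable ?P (\<lambda>x. (f x)\<^sup>2)"
    unfolding f2 using ibb by auto
  have Ef2: "integral\<^sup>L ?P (\<lambda>x. (f x)\<^sup>2) = (1 / m)\<^sup>2 * (m * (p - p * p))"
  proof -
    have "integral\<^sup>L ?P (\<lambda>x. (f x)\<^sup>2) = (1 / m)\<^sup>2 * (\<Sum>i\<in>I. \<Sum>k\<in>I. integral\<^sup>L ?P (\<lambda>x. (a i x - p) * (a k x - p)))"
      unfolding f2 using ibb by (simp add: integral_sum)
    also have "\<dots> = (1 / m)\<^sup>2 * (m * (p - p * p))"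
      using I by (simp add: Ebb m_def)
    finally show ?thesis .
  qed
  have "measure ?P {x\<in>space ?P. \<eta> < \<bar>f x\<bar>} \<le> measure ?P {x\<in>space ?P. \<bar>f x\<bar> \<ge> \<eta>}"
    by (intro P.finite_measure_mono) auto
  also have "\<dots> \<le> integral\<^sup>L ?P (\<lambda>x. (f x)\<^sup>2) / \<eta>\<^sup>2"
    by (rule P.second_moment_method[OF fm if2 eta])
  also have "\<dots> \<le> 1 / (m * \<eta>\<^sup>2)"
  proof -
    have "(1 / m)\<^sup>2 * (m * (p - p * p)) \<le> 1 / m"
    proof -
      have q: "p - p * p \<le> 1" using p01 mult_nonneg_nonneg[of p p] by linarith
      have "(1 / m)\<^sup>2 * (m * (p - p * p)) = (p - p * p) / m"
        using m by (simp add: power2_eq_square field_simps)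
      also have "\<dots> \<le> 1 / m" using q m by (intro divide_right_mono) auto
      finally show ?thesis .
    qed
    hence "(1 / m)\<^sup>2 * (m * (p - p * p)) / \<eta>\<^sup>2 \<le> (1 / m) / \<eta>\<^sup>2"
      by (intro divide_right_mono) auto
    thus ?thesis unfolding Ef2 by simp
  qed
  finally show ?thesis by (simp add: f_def a_def m_def p_def)
qed



lemma T_diff_bound:
  fixes a b h :: "'h::real_inner"
  assumes t: "0 < t"
  shows "norm (inner h a *\<^sub>R a - inner h b *\<^sub>R b) \<le> norm h * ((1 + 1/t) * (norm (a - b))\<^sup>2 + t * (norm b)\<^sup>2)"
proof -
  define d where "d = a - b"
  have a: "a = b + d" by (simp add: d_def)
  have eq: "inner h a *\<^sub>R a - inner h b *\<^sub>R b = inner h d *\<^sub>R d + inner h d *\<^sub>R b + inner h b *\<^sub>R d"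
    unfolding a by (simp add: inner_add_right algebra_simps)
  have "norm (inner h a *\<^sub>R a - inner h b *\<^sub>R b) \<le> norm (inner h d *\<^sub>R d) + norm (inner h d *\<^sub>R b) + norm (inner h b *\<^sub>R d)"
    unfolding eq by (metis norm_triangle_ineq order_trans add_right_mono)
  also have "\<dots> \<le> norm h * norm d * norm d + norm h * norm d * norm b + norm h * norm b * norm d"
    by (intro add_mono) (auto intro!: mult_right_mono Cauchy_Schwarz_ineq2)
  also have "\<dots> = norm h * ((norm d)\<^sup>2 + 2 * norm d * norm b)"
    by (simp add: power2_eq_square algebra_simps)
  also have "\<dots> \<le> norm h * ((1 + 1/t) * (norm d)\<^sup>2 + t * (norm b)\<^sup>2)"
  proof (rule mult_left_mono)
    have "0 \<le> (norm d - t * norm b)\<^sup>2" by simp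
    hence "t * (2 * norm d * norm b) \<le> (norm d)\<^sup>2 + t * (t * (norm b)\<^sup>2)"
      by (simp add: power2_eq_square algebra_simps)
    hence "2 * norm d * norm b \<le> (norm d)\<^sup>2 / t + t * (norm b)\<^sup>2"
      using t by (simp add: field_simps)
    thus "(norm d)\<^sup>2 + 2 * norm d * norm b \<le> (1 + 1/t) * (norm d)\<^sup>2 + t * (norm b)\<^sup>2"
      by (simp add: algebra_simps)
  qed simp
  finally show ?thesis by (simp add: d_def)
qed

lemma simple_L2_approx:
  fixes f :: "'z \<Rightarrow> 'h::{banach, second_countable_topology}"
  assumes M: "finite_measure M" and f[measurable]: "f \<in> borel_measurable M"
    and fi: "integrable M (\<lambda>z. (norm (f z))\<^sup>2)" and d: "0 < d"
  shows "\<exists>\<psi>. simple_function M \<psi> \<and> integrable M (\<lambda>z. (norm (\<psi> z - f z))\<^sup>2) \<and> integral\<^sup>L M (\<lambda>z. (norm (\<psi> z - f z))\<^sup>2) < d"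
proof -
  obtain F where Fs: "\<And>i. simple_function M (F i)"
    and Fl: "\<And>x. x \<in> space M \<Longrightarrow> (\<lambda>i. F i x) \<longlonglongrightarrow> f x"
    and Fb: "\<And>i x. x \<in> space M \<Longrightarrow> dist (F i x) 0 \<le> 2 * dist (f x) 0"
    using borel_measurable_implies_sequence_metric[OF f, of 0] by blast
  have Fm[measurable]: "F i \<in> borel_measurable M" for i
    using Fs by (rule borel_measurable_simple_function)
  have w: "integrable M (\<lambda>z. 9 * (norm (f z))\<^sup>2)" using fi by simp
  have l: "AE x in M. (\<lambda>i. (norm (F i x - f x))\<^sup>2) \<longlonglongrightarrow> 0"
  proof (rule AE_I2)
    fix x assume x: "x \<in> space M"
    have "(\<lambda>i. F i x - f x) \<longlonglongrightarrow> 0" using Fl[OF x] by (simp add: LIM_zero)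
    hence "(\<lambda>i. norm (F i x - f x)) \<longlonglongrightarrow> 0" by (simp add: tendsto_norm_zero)
    from tendsto_mult[OF this this] show "(\<lambda>i. (norm (F i x - f x))\<^sup>2) \<longlonglongrightarrow> 0"
      by (simp add: power2_eq_square)
  qed
  have b: "AE x in M. norm ((norm (F i x - f x))\<^sup>2) \<le> 9 * (norm (f x))\<^sup>2" for i
  proof (rule AE_I2)
    fix x assume x: "x \<in> space M"
    have "norm (F i x - f x) \<le> norm (F i x) + norm (f x)" by (rule norm_triangle_ineq4)
    also have "\<dots> \<le> 3 * norm (f x)" using Fb[OF x, of i] by (simp add: dist_norm)
    finally have "norm (F i x - f x) \<le> 3 * norm (f x)" .
    hence "(norm (F i x - f x))\<^sup>2 \<le> (3 * norm (f x))\<^sup>2" by (intro power_mono) auto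
    thus "norm ((norm (F i x - f x))\<^sup>2) \<le> 9 * (norm (f x))\<^sup>2" by (simp add: power_mult_distrib)
  qed
  have lim: "(\<lambda>i. integral\<^sup>L M (\<lambda>z. (norm (F i z - f z))\<^sup>2)) \<longlonglongrightarrow> integral\<^sup>L M (\<lambda>z. 0::real)"
    by (rule integral_dominated_convergence[OF _ _ w l b]) auto
  have intg: "integrable M (\<lambda>z. (norm (F i z - f z))\<^sup>2)" for i
    by (rule integrable_dominated_convergence2[OF _ _ w l b]) auto
  from lim have "(\<lambda>i. integral\<^sup>L M (\<lambda>z. (norm (F i z - f z))\<^sup>2)) \<longlonglongrightarrow> 0" by simp
  from order_tendstoD(2)[OF this d] obtain i where "integral\<^sup>L M (\<lambda>z. (norm (F i z - f z))\<^sup>2) < d"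
    by (auto simp: eventually_sequentially)
  thus ?thesis using Fs intg by blast
qed

lemma emp_bound:
  fixes f g \<psi> :: "'z \<Rightarrow> 'h::real_inner" and x :: "nat \<Rightarrow> 'z" and I :: "nat set"
  assumes I: "finite I" "I \<noteq> {}" and t: "0 < t"
    and R: "finite R" "range \<psi> \<subseteq> R"
    and E1: "E\<psi> = (\<Sum>v\<in>R. p v *\<^sub>R (inner h v *\<^sub>R v))"
    and E2: "norm (E\<psi> - S0) \<le> norm h * ((1 + 1/t) * r + t * V)"
  shows "norm ((1 / real (card I)) *\<^sub>R (\<Sum>i\<in>I. inner h (f (x i)) *\<^sub>R f (x i)) - S0) \<le> norm h *
    ((1 + 1/t) * ((1 / real (card I)) * (\<Sum>i\<in>I. (norm (f (x i) - g (x i)))\<^sup>2)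
               + (1 / real (card I)) * (\<Sum>i\<in>I. (norm (\<psi> (x i) - g (x i)))\<^sup>2) + r)
     + t * (2 * ((1 / real (card I)) * (\<Sum>i\<in>I. (norm (g (x i)))\<^sup>2)) + V)
     + (\<Sum>v\<in>R. \<bar>(1 / real (card I)) * (\<Sum>i\<in>I. indicator (\<psi> -` {v}) (x i)) - p v\<bar> * (norm v)\<^sup>2))"
proof -
  define c where "c = 1 / real (card I)"
  have c: "0 < c" using I by (simp add: c_def card_gt_0_iff)
  define T where "T v = inner h v *\<^sub>R v" for v
  define freq where "freq v = c * (\<Sum>i\<in>I. indicator (\<psi> -` {v}) (x i))" for v
  have Tpsi: "T (\<psi> z) = (\<Sum>v\<in>R. indicator (\<psi> -` {v}) z *\<^sub>R T v)" for z
  proof -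
    have "(\<Sum>v\<in>R. indicator (\<psi> -` {v}) z *\<^sub>R T v) = (\<Sum>v\<in>R. if \<psi> z = v then T v else 0)"
      by (intro sum.cong) (auto simp: indicator_def)
    also have "\<dots> = T (\<psi> z)" using R by (simp add: sum.delta' subset_iff)
    finally show ?thesis by simp
  qed
  have emp: "c *\<^sub>R (\<Sum>i\<in>I. T (\<psi> (x i))) = (\<Sum>v\<in>R. freq v *\<^sub>R T v)"
    unfolding Tpsi freq_def
    by (subst sum.swap) (simp add: scaleR_sum_right scaleR_sum_left[symmetric])
  have split: "c *\<^sub>R (\<Sum>i\<in>I. T (f (x i))) - S0 =
      c *\<^sub>R (\<Sum>i\<in>I. T (f (x i)) - T (g (x i))) + c *\<^sub>R (\<Sum>i\<in>I. T (g (x i)) - T (\<psi> (x i)))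
      + (\<Sum>v\<in>R. (freq v - p v) *\<^sub>R T v) + (E\<psi> - S0)"
    using emp unfolding E1 T_def[symmetric]
    by (simp add: sum_subtractf scaleR_diff_right scaleR_diff_left algebra_simps)
  have b1: "norm (c *\<^sub>R (\<Sum>i\<in>I. T (f (x i)) - T (g (x i)))) \<le>
      c * (\<Sum>i\<in>I. norm h * ((1 + 1/t) * (norm (f (x i) - g (x i)))\<^sup>2 + t * (norm (g (x i)))\<^sup>2))"
  proof -
    have "norm (\<Sum>i\<in>I. T (f (x i)) - T (g (x i))) \<le> (\<Sum>i\<in>I. norm (T (f (x i)) - T (g (x i))))"
      by (rule norm_sum)
    also have "\<dots> \<le> (\<Sum>i\<in>I. norm h * ((1 + 1/t) * (norm (f (x i) - g (x i)))\<^sup>2 + t * (norm (g (x i)))\<^sup>2))"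
      by (intro sum_mono) (simp add: T_def T_diff_bound t)
    finally show ?thesis using c by (simp add: mult_left_mono)
  qed
  have b2: "norm (c *\<^sub>R (\<Sum>i\<in>I. T (g (x i)) - T (\<psi> (x i)))) \<le>
      c * (\<Sum>i\<in>I. norm h * ((1 + 1/t) * (norm (\<psi> (x i) - g (x i)))\<^sup>2 + t * (norm (g (x i)))\<^sup>2))"
  proof -
    have "norm (\<Sum>i\<in>I. T (g (x i)) - T (\<psi> (x i))) \<le> (\<Sum>i\<in>I. norm (T (g (x i)) - T (\<psi> (x i))))"
      by (rule norm_sum)
    also have "\<dots> \<le> (\<Sum>i\<in>I. norm h * ((1 + 1/t) * (norm (\<psi> (x i) - g (x i)))\<^sup>2 + t * (norm (g (x i)))\<^sup>2))"
      by (intro sum_mono) (simp add: T_def T_diff_bound t norm_minus_commute[of "inner h (g _) *\<^sub>R g _"])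
    finally show ?thesis using c by (simp add: mult_left_mono)
  qed
  have b3: "norm (\<Sum>v\<in>R. (freq v - p v) *\<^sub>R T v) \<le> (\<Sum>v\<in>R. \<bar>freq v - p v\<bar> * (norm h * (norm v)\<^sup>2))"
  proof (rule order_trans[OF norm_sum], rule sum_mono)
    fix v
    have "norm (T v) \<le> norm h * (norm v)\<^sup>2"
      unfolding T_def using Cauchy_Schwarz_ineq2[of h v]
      by (simp add: power2_eq_square mult.assoc[symmetric] mult_right_mono)
    thus "norm ((freq v - p v) *\<^sub>R T v) \<le> \<bar>freq v - p v\<bar> * (norm h * (norm v)\<^sup>2)"
      by (simp add: mult_left_mono)
  qed
  have "norm (c *\<^sub>R (\<Sum>i\<in>I. T (f (x i))) - S0) \<le>
      norm (c *\<^sub>R (\<Sum>i\<in>I. T (f (x i)) - T (g (x i)))) + norm (c *\<^sub>R (\<Sum>i\<in>I. T (g (x i)) - T (\<psi> (x i))))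
      + norm (\<Sum>v\<in>R. (freq v - p v) *\<^sub>R T v) + norm (E\<psi> - S0)"
    unfolding split by (intro norm_triangle_le add_mono order_refl norm_triangle_ineq)
  also have "\<dots> \<le> c * (\<Sum>i\<in>I. norm h * ((1 + 1/t) * (norm (f (x i) - g (x i)))\<^sup>2 + t * (norm (g (x i)))\<^sup>2))
     + c * (\<Sum>i\<in>I. norm h * ((1 + 1/t) * (norm (\<psi> (x i) - g (x i)))\<^sup>2 + t * (norm (g (x i)))\<^sup>2))
     + (\<Sum>v\<in>R. \<bar>freq v - p v\<bar> * (norm h * (norm v)\<^sup>2)) + norm h * ((1 + 1/t) * r + t * V)"
    by (intro add_mono b1 b2 b3 E2)
  also have "\<dots> = norm h *
    ((1 + 1/t) * (c * (\<Sum>i\<in>I. (norm (f (x i) - g (x i)))\<^sup>2) + c * (\<Sum>i\<in>I. (norm (\<psi> (x i) - g (x i)))\<^sup>2) + r)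
     + t * (2 * (c * (\<Sum>i\<in>I. (norm (g (x i)))\<^sup>2)) + V)
     + (\<Sum>v\<in>R. \<bar>freq v - p v\<bar> * (norm v)\<^sup>2))"
    by (simp add: algebra_simps sum.distrib sum_distrib_left)
  finally show ?thesis unfolding c_def freq_def T_def .
qed



definition Bexp :: "real \<Rightarrow> real \<Rightarrow> real \<Rightarrow> 'z measure \<Rightarrow> ('z \<Rightarrow> 'h::real_normed_vector) \<Rightarrow> ('z \<Rightarrow> 'h)
    \<Rightarrow> 'h set \<Rightarrow> nat set \<Rightarrow> ('z \<Rightarrow> 'h) \<Rightarrow> (nat \<Rightarrow> 'z) \<Rightarrow> real" where
  "Bexp t r V P0 phi0 \<psi> R I f x =
    ((1 + 1/t) * ((1 / real (card I)) * (\<Sum>i\<in>I. (norm (f (x i) - phi0 (x i)))\<^sup>2)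
               + (1 / real (card I)) * (\<Sum>i\<in>I. (norm (\<psi> (x i) - phi0 (x i)))\<^sup>2) + r)
     + t * (2 * ((1 / real (card I)) * (\<Sum>i\<in>I. (norm (phi0 (x i)))\<^sup>2)) + V)
     + (\<Sum>v\<in>R. \<bar>(1 / real (card I)) * (\<Sum>i\<in>I. indicator (\<psi> -` {v}) (x i)) - measure P0 (\<psi> -` {v})\<bar> * (norm v)\<^sup>2))"

lemma Bexp_meas:
  fixes P0 :: "'z measure" and F :: "(nat \<Rightarrow> 'z) \<Rightarrow> 'z \<Rightarrow> 'h::{real_normed_vector,second_countable_topology}"
  assumes F[measurable]: "\<And>i. (\<lambda>x. F x (x i)) \<in> borel_measurable (PiM UNIV (\<lambda>_. P0))"
    and phi0[measurable]: "phi0 \<in> borel_measurable P0" and psi[measurable]: "\<psi> \<in> borel_measurable P0"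
    and Av[measurable]: "\<And>v. \<psi> -` {v} \<in> sets P0"
  shows "(\<lambda>x. Bexp t r V P0 phi0 \<psi> R I (F x) x) \<in> borel_measurable (PiM UNIV (\<lambda>_. P0))"
  unfolding Bexp_def by measurable

lemma half_prob:
  fixes P0 :: "'z measure" and F :: "(nat \<Rightarrow> 'z) \<Rightarrow> 'z \<Rightarrow> 'h::{real_inner,banach,second_countable_topology}"
    and phi0 \<psi> :: "'z \<Rightarrow> 'h" and I J :: "nat set" and R :: "'h set"
  assumes P0: "prob_space P0" and sp: "space P0 = UNIV"
    and I: "finite I" "I \<noteq> {}" "I \<inter> J = {}"
    and F[measurable]: "(\<lambda>(x, z). F x z) \<in> borel_measurable (PiM UNIV (\<lambda>_. P0) \<Otimes>\<^sub>M P0)"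
    and dep: "\<And>x y. (\<forall>k\<in>J. x k = y k) \<Longrightarrow> F x = F y"
    and phi0[measurable]: "phi0 \<in> borel_measurable P0"
    and V: "integrable P0 (\<lambda>z. (norm (phi0 z))\<^sup>2)" "integral\<^sup>L P0 (\<lambda>z. (norm (phi0 z))\<^sup>2) = V"
    and psi: "simple_function P0 \<psi>" "R = \<psi> ` UNIV"
    and r: "integrable P0 (\<lambda>z. (norm (\<psi> z - phi0 z))\<^sup>2)" "integral\<^sup>L P0 (\<lambda>z. (norm (\<psi> z - phi0 z))\<^sup>2) = r"
    and pos: "0 < t" "0 < cD" "0 < \<delta>" "0 < K" "\<And>v. v \<in> R \<Longrightarrow> 0 < \<eta>v v"
  shows "measure (PiM UNIV (\<lambda>_. P0)) {x\<in>space (PiM UNIV (\<lambda>_. P0)).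
     (1 + 1/t) * (2 * cD + r) + t * (2 * K + V) + (\<Sum>v\<in>R. \<eta>v v * (norm v)\<^sup>2) <
    Bexp t r V P0 phi0 \<psi> R I (F x) x}
   \<le> measure (PiM UNIV (\<lambda>_. P0)) {x\<in>space (PiM UNIV (\<lambda>_. P0)). ennreal \<delta> < (\<integral>\<^sup>+ z. ennreal ((norm (F x z - phi0 z))\<^sup>2) \<partial>P0)}
     + \<delta> / cD + r / cD + V / K + (\<Sum>v\<in>R. 1 / (real (card I) * (\<eta>v v)\<^sup>2))"
proof -
  let ?P = "PiM (UNIV::nat set) (\<lambda>_. P0)"
  interpret P: prob_space ?P using P0 by (intro prob_space_PiM) auto
  interpret P0: prob_space P0 by fact
  have spP: "space ?P = UNIV" by (simp add: space_PiM sp)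
  have psim[measurable]: "\<psi> \<in> borel_measurable P0" using psi(1) by (rule borel_measurable_simple_function)
  have Rfin: "finite R" using psi sp simple_functionD(1)[OF psi(1)] by simp
  have Av[measurable]: "\<psi> -` {v} \<in> sets P0" for v
    using simple_functionD(2)[OF psi(1), of "{v}"] sp by simp
  define c where "c = 1 / real (card I)"
  define D where "D x = c * (\<Sum>i\<in>I. (norm (F x (x i) - phi0 (x i)))\<^sup>2)" for x
  define Rr where "Rr x = c * (\<Sum>i\<in>I. (norm (\<psi> (x i) - phi0 (x i)))\<^sup>2)" for x
  define E where "E x = c * (\<Sum>i\<in>I. (norm (phi0 (x i)))\<^sup>2)" for x
  define Q where "Q v x = \<bar>c * (\<Sum>i\<in>I. indicator (\<psi> -` {v}) (x i)) - measure P0 (\<psi> -` {v})\<bar>" for v x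
  have Fi[measurable]: "(\<lambda>x. F x (x i)) \<in> borel_measurable ?P" for i
  proof -
    have "(\<lambda>(x, z). F x z) \<circ> (\<lambda>x. (x, x i)) \<in> borel_measurable ?P"
      by (rule measurable_comp[OF _ F]) measurable
    thus ?thesis by (simp add: comp_def)
  qed
  have Dm[measurable]: "D \<in> borel_measurable ?P" unfolding D_def by measurable
  have Rm[measurable]: "Rr \<in> borel_measurable ?P" unfolding Rr_def by measurable
  have Em[measurable]: "E \<in> borel_measurable ?P" unfolding E_def by measurable
  have Qm[measurable]: "Q v \<in> borel_measurable ?P" for v unfolding Q_def by measurable
  let ?B = "{x\<in>space ?P. (1 + 1/t) * (2 * cD + r) + t * (2 * K + V) + (\<Sum>v\<in>R. \<eta>v v * (norm v)\<^sup>2) <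
      (1 + 1/t) * (D x + Rr x + r) + t * (2 * E x + V) + (\<Sum>v\<in>R. Q v x * (norm v)\<^sup>2)}"
  have sub: "?B \<subseteq> {x\<in>space ?P. cD < D x} \<union> {x\<in>space ?P. cD < Rr x} \<union> {x\<in>space ?P. K < E x}
      \<union> (\<Union>v\<in>R. {x\<in>space ?P. \<eta>v v < Q v x})"
  proof
    fix x assume xB: "x \<in> ?B"
    show "x \<in> {x\<in>space ?P. cD < D x} \<union> {x\<in>space ?P. cD < Rr x} \<union> {x\<in>space ?P. K < E x}
      \<union> (\<Union>v\<in>R. {x\<in>space ?P. \<eta>v v < Q v x})"
    proof (rule ccontr)
      assume "\<not> ?thesis"
      hence h: "D x \<le> cD" "Rr x \<le> cD" "E x \<le> K" "\<And>v. v \<in> R \<Longrightarrow> Q v x \<le> \<eta>v v"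
        using spP by auto
      have "(1 + 1/t) * (D x + Rr x + r) \<le> (1 + 1/t) * (2 * cD + r)"
        using h pos by (intro mult_left_mono) auto
      moreover have "t * (2 * E x + V) \<le> t * (2 * K + V)"
        using h pos by (intro mult_left_mono) auto
      moreover have "(\<Sum>v\<in>R. Q v x * (norm v)\<^sup>2) \<le> (\<Sum>v\<in>R. \<eta>v v * (norm v)\<^sup>2)"
        using h by (intro sum_mono mult_right_mono) auto
      ultimately show False using xB by auto
    qed
  qed
  have depG: "(\<lambda>z. (norm (F x z - phi0 z))\<^sup>2) = (\<lambda>z. (norm (F y z - phi0 z))\<^sup>2)"
    if "\<forall>k\<in>J. x k = y k" for x y using dep[OF that] by simp
  have bD: "measure ?P {x\<in>space ?P. cD < D x} \<le> measure ?P {x\<in>space ?P. ennreal \<delta> < (\<integral>\<^sup>+ z. ennreal ((norm (F x z - phi0 z))\<^sup>2) \<partial>P0)} + \<delta> / cD"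
    unfolding D_def c_def
    by (rule cross_bound[OF P0 I(1) I(3) I(2), where G="\<lambda>x z. (norm (F x z - phi0 z))\<^sup>2"])
       (use pos depG sp in \<open>auto\<close>)
  have bR: "measure ?P {x\<in>space ?P. cD < Rr x} \<le> r / cD"
  proof (rule markov_real[OF P.prob_space_axioms Rm])
    show "0 \<le> Rr x" for x unfolding Rr_def c_def by (simp add: sum_nonneg)
    have "(\<integral>\<^sup>+ x. ennreal (Rr x) \<partial>?P) = (\<integral>\<^sup>+ x. (\<integral>\<^sup>+ z. ennreal ((norm (\<psi> z - phi0 z))\<^sup>2) \<partial>P0) \<partial>?P)"
      unfolding Rr_def c_def
      by (rule key_avg[OF P0 I(1) _ I(2), where J="{}" and G="\<lambda>x z. (norm (\<psi> z - phi0 z))\<^sup>2"]) auto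
    also have "\<dots> = ennreal r"
      using r by (simp add: nn_integral_eq_integral P.emeasure_space_1)
    finally show "(\<integral>\<^sup>+ x. ennreal (Rr x) \<partial>?P) \<le> ennreal r" by simp
    show "0 \<le> r" using r(2)[symmetric] by simp
  qed (use pos in auto)
  have bE: "measure ?P {x\<in>space ?P. K < E x} \<le> V / K"
  proof (rule markov_real[OF P.prob_space_axioms Em])
    show "0 \<le> E x" for x unfolding E_def c_def by (simp add: sum_nonneg)
    have "(\<integral>\<^sup>+ x. ennreal (E x) \<partial>?P) = (\<integral>\<^sup>+ x. (\<integral>\<^sup>+ z. ennreal ((norm (phi0 z))\<^sup>2) \<partial>P0) \<partial>?P)"
      unfolding E_def c_def
      by (rule key_avg[OF P0 I(1) _ I(2), where J="{}" and G="\<lambda>x z. (norm (phi0 z))\<^sup>2"]) auto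
    also have "\<dots> = ennreal V"
      using V by (simp add: nn_integral_eq_integral P.emeasure_space_1)
    finally show "(\<integral>\<^sup>+ x. ennreal (E x) \<partial>?P) \<le> ennreal V" by simp
    show "0 \<le> V" using V(2)[symmetric] by simp
  qed (use pos in auto)
  have bQ: "measure ?P {x\<in>space ?P. \<eta>v v < Q v x} \<le> 1 / (real (card I) * (\<eta>v v)\<^sup>2)" if "v \<in> R" for v
    unfolding Q_def c_def
    by (rule freq_cheb[OF P0 Av I(1) I(2) pos(5)[OF that]])
  have UQ[measurable]: "(\<Union>v\<in>R. {x\<in>space ?P. \<eta>v v < Q v x}) \<in> sets ?P"
    using Rfin by (intro sets.finite_UN) auto
  have "measure ?P ?B \<le> measure ?P ({x\<in>space ?P. cD < D x} \<union> {x\<in>space ?P. cD < Rr x} \<union> {x\<in>space ?P. K < E x}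
      \<union> (\<Union>v\<in>R. {x\<in>space ?P. \<eta>v v < Q v x}))"
    using sub Rfin by (intro P.finite_measure_mono) auto
  also have "\<dots> \<le> measure ?P ({x\<in>space ?P. cD < D x} \<union> {x\<in>space ?P. cD < Rr x} \<union> {x\<in>space ?P. K < E x})
      + measure ?P (\<Union>v\<in>R. {x\<in>space ?P. \<eta>v v < Q v x})"
    using Rfin by (intro measure_Un_le) auto
  also have "\<dots> \<le> (measure ?P {x\<in>space ?P. cD < D x} + measure ?P {x\<in>space ?P. cD < Rr x} + measure ?P {x\<in>space ?P. K < E x})
      + (\<Sum>v\<in>R. measure ?P {x\<in>space ?P. \<eta>v v < Q v x})"
  proof (intro add_mono)
    show "measure ?P ({x\<in>space ?P. cD < D x} \<union> {x\<in>space ?P. cD < Rr x} \<union> {x\<in>space ?P. K < E x})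
      \<le> measure ?P {x\<in>space ?P. cD < D x} + measure ?P {x\<in>space ?P. cD < Rr x} + measure ?P {x\<in>space ?P. K < E x}"
      by (rule order_trans[OF measure_Un_le]) (auto intro!: add_mono measure_Un_le)
    show "measure ?P (\<Union>v\<in>R. {x\<in>space ?P. \<eta>v v < Q v x}) \<le> (\<Sum>v\<in>R. measure ?P {x\<in>space ?P. \<eta>v v < Q v x})"
      using Rfin by (intro P.finite_measure_subadditive_finite) auto
  qed
  also have "\<dots> \<le> (measure ?P {x\<in>space ?P. ennreal \<delta> < (\<integral>\<^sup>+ z. ennreal ((norm (F x z - phi0 z))\<^sup>2) \<partial>P0)} + \<delta> / cD + r / cD + V / K)
      + (\<Sum>v\<in>R. 1 / (real (card I) * (\<eta>v v)\<^sup>2))"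
    using bD bR bE bQ by (intro add_mono sum_mono) auto
  finally show ?thesis unfolding Bexp_def D_def Rr_def E_def Q_def c_def .
qed



lemma outer_prob_le:
  assumes "B \<in> sets M" "A \<subseteq> B"
  shows "outer_prob M A \<le> measure M B"
  unfolding outer_prob_def
  by (rule cInf_lower) (use assms in \<open>auto intro!: bdd_belowI[where m=0]\<close>)

lemma outer_prob_nonneg:
  assumes "A \<subseteq> space M"
  shows "0 \<le> outer_prob M A"
  unfolding outer_prob_def
  by (rule cInf_greatest) (use assms in auto)

lemma outer_prob_eq:
  assumes "finite_measure M" "A \<in> sets M"
  shows "outer_prob M A = measure M A"
proof (rule antisym)
  show "outer_prob M A \<le> measure M A" by (rule outer_prob_le[OF assms(2)]) simp
  show "measure M A \<le> outer_prob M A"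
    unfolding outer_prob_def
    by (rule cInf_greatest) (use assms in \<open>auto intro: finite_measure.finite_measure_mono\<close>)
qed

lemma tendsto_small:
  fixes f :: "nat \<Rightarrow> real"
  assumes nn: "\<And>m. 0 \<le> f m" and ev: "\<And>\<eta>. 0 < \<eta> \<Longrightarrow> eventually (\<lambda>m. f m \<le> \<eta>) sequentially"
  shows "f \<longlonglongrightarrow> 0"
proof (rule order_tendstoI)
  fix a :: real assume "a < 0" thus "eventually (\<lambda>m. a < f m) sequentially"
  proof -
    have "\<forall>m. a < f m" using \<open>a < 0\<close> nn by (meson less_le_trans)
    thus ?thesis by (simp add: always_eventually)
  qed
next
  fix a :: real assume a: "0 < a"
  from ev[of "a/2"] a show "eventually (\<lambda>m. f m < a) sequentially"
    by (auto elim: eventually_mono)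
qed

lemma L2_lt:
  fixes f :: "'z \<Rightarrow> 'h::real_normed_vector"
  assumes s: "0 \<le> s"
  shows "(ennreal s < L2norm P f) = (ennreal (s\<^sup>2) < (\<integral>\<^sup>+ z. ennreal ((norm (f z))\<^sup>2) \<partial>P))"
proof (cases "(\<integral>\<^sup>+ z. ennreal ((norm (f z))\<^sup>2) \<partial>P) = \<infinity>")
  case True thus ?thesis by (simp add: L2norm_def)
next
  case False
  then obtain q where q: "(\<integral>\<^sup>+ z. ennreal ((norm (f z))\<^sup>2) \<partial>P) = ennreal q" "0 \<le> q"
    by (cases "(\<integral>\<^sup>+ z. ennreal ((norm (f z))\<^sup>2) \<partial>P)") auto
  have "(ennreal s < L2norm P f) = (s < sqrt q)"
    using q s False by (simp add: L2norm_def Let_def ennreal_less_iff)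
  also have "\<dots> = (s\<^sup>2 < q)"
  proof -
    have "sqrt (s\<^sup>2) = s" using s by simp
    hence "(s < sqrt q) = (sqrt (s\<^sup>2) < sqrt q)" by simp
    also have "\<dots> = (s\<^sup>2 < q)" by (rule real_sqrt_less_iff)
    finally show ?thesis .
  qed
  also have "\<dots> = (ennreal (s\<^sup>2) < ennreal q)" by (simp add: ennreal_less_iff)
  finally show ?thesis using q by simp
qed

lemma onorm_bound:
  fixes f :: "'a::real_normed_vector \<Rightarrow> 'b::real_normed_vector"
  assumes "\<And>h. norm (f h) \<le> b * norm h" "0 \<le> b"
  shows "onorm f \<le> b"
  unfolding onorm_def
proof (rule cSUP_least)
  fix x
  show "norm (f x) / norm x \<le> b"
  proof (cases "norm x = 0")
    case True thus ?thesis using assms by simp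
  next
    case False thus ?thesis using assms(1)[of x] by (simp add: divide_le_eq)
  qed
qed simp

lemma psi_E1:
  fixes \<psi> :: "'z \<Rightarrow> 'h::{real_inner,banach,second_countable_topology}"
  assumes P: "finite_measure P" and sp: "space P = UNIV" and psi: "simple_function P \<psi>"
  shows "integrable P (\<lambda>z. inner h (\<psi> z) *\<^sub>R \<psi> z)"
    and "integral\<^sup>L P (\<lambda>z. inner h (\<psi> z) *\<^sub>R \<psi> z) = (\<Sum>v\<in>\<psi> ` UNIV. measure P (\<psi> -` {v}) *\<^sub>R (inner h v *\<^sub>R v))"
proof -
  interpret finite_measure P by fact
  have R: "finite (\<psi> ` UNIV)" using simple_functionD(1)[OF psi] sp by simp
  have Av: "\<psi> -` {v} \<in> sets P" for v
    using simple_functionD(2)[OF psi, of "{v}"] sp by simp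
  have eq: "inner h (\<psi> z) *\<^sub>R \<psi> z = (\<Sum>v\<in>\<psi> ` UNIV. indicator (\<psi> -` {v}) z *\<^sub>R (inner h v *\<^sub>R v))" for z
  proof -
    have "(\<Sum>v\<in>\<psi> ` UNIV. indicator (\<psi> -` {v}) z *\<^sub>R (inner h v *\<^sub>R v)) = (\<Sum>v\<in>\<psi> ` UNIV. if \<psi> z = v then inner h v *\<^sub>R v else 0)"
      by (intro sum.cong) (auto simp: indicator_def)
    also have "\<dots> = inner h (\<psi> z) *\<^sub>R \<psi> z" using R by simp
    finally show ?thesis by simp
  qed
  have ii: "integrable P (\<lambda>z. indicator (\<psi> -` {v}) z *\<^sub>R (inner h v *\<^sub>R v))" for v
    using Av by (intro integrable_scaleR_left integrable_real_indicator) (auto simp: emeasure_eq_measure)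
  show "integrable P (\<lambda>z. inner h (\<psi> z) *\<^sub>R \<psi> z)"
    unfolding eq by (rule Bochner_Integration.integrable_sum) (rule ii)
  show "integral\<^sup>L P (\<lambda>z. inner h (\<psi> z) *\<^sub>R \<psi> z) = (\<Sum>v\<in>\<psi> ` UNIV. measure P (\<psi> -` {v}) *\<^sub>R (inner h v *\<^sub>R v))"
  proof -
    have each: "integral\<^sup>L P (\<lambda>z. indicator (\<psi> -` {v}) z *\<^sub>R (inner h v *\<^sub>R v)) = measure P (\<psi> -` {v}) *\<^sub>R (inner h v *\<^sub>R v)" for v
    proof -
      have "integral\<^sup>L P (\<lambda>z. indicator (\<psi> -` {v}) z *\<^sub>R (inner h v *\<^sub>R v)) = integral\<^sup>L P (indicator (\<psi> -` {v})) *\<^sub>R (inner h v *\<^sub>R v)"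
        by (rule integral_scaleR_left) (use Av[of v] in \<open>auto simp: emeasure_eq_measure\<close>)
      thus ?thesis using sp by simp
    qed
    show ?thesis unfolding eq
      by (subst Bochner_Integration.integral_sum[OF ii]) (rule sum.cong[OF refl each])
  qed
qed

lemma psi_E2:
  fixes \<psi> phi0 :: "'z \<Rightarrow> 'h::{real_inner,banach,second_countable_topology}"
  assumes t: "0 < t"
    and i1: "integrable P (\<lambda>z. inner h (\<psi> z) *\<^sub>R \<psi> z)"
    and i2: "integrable P (\<lambda>z. inner h (phi0 z) *\<^sub>R phi0 z)"
    and ir: "integrable P (\<lambda>z. (norm (\<psi> z - phi0 z))\<^sup>2)" "integral\<^sup>L P (\<lambda>z. (norm (\<psi> z - phi0 z))\<^sup>2) = r"
    and iV: "integrable P (\<lambda>z. (norm (phi0 z))\<^sup>2)" "integral\<^sup>L P (\<lambda>z. (norm (phi0 z))\<^sup>2) = V"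
  shows "norm (integral\<^sup>L P (\<lambda>z. inner h (\<psi> z) *\<^sub>R \<psi> z) - integral\<^sup>L P (\<lambda>z. inner h (phi0 z) *\<^sub>R phi0 z))
     \<le> norm h * ((1 + 1/t) * r + t * V)"
proof -
  have eq: "integral\<^sup>L P (\<lambda>z. inner h (\<psi> z) *\<^sub>R \<psi> z) - integral\<^sup>L P (\<lambda>z. inner h (phi0 z) *\<^sub>R phi0 z)
      = integral\<^sup>L P (\<lambda>z. inner h (\<psi> z) *\<^sub>R \<psi> z - inner h (phi0 z) *\<^sub>R phi0 z)"
    using i1 i2 by simp
  have "norm (integral\<^sup>L P (\<lambda>z. inner h (\<psi> z) *\<^sub>R \<psi> z) - integral\<^sup>L P (\<lambda>z. inner h (phi0 z) *\<^sub>R phi0 z))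
      \<le> integral\<^sup>L P (\<lambda>z. norm (inner h (\<psi> z) *\<^sub>R \<psi> z - inner h (phi0 z) *\<^sub>R phi0 z))"
    unfolding eq by (rule integral_norm_bound)
  also have "\<dots> \<le> integral\<^sup>L P (\<lambda>z. norm h * ((1 + 1/t) * (norm (\<psi> z - phi0 z))\<^sup>2 + t * (norm (phi0 z))\<^sup>2))"
    using i1 i2 ir iV by (intro integral_mono T_diff_bound t) auto
  also have "\<dots> = norm h * ((1 + 1/t) * r + t * V)"
    using ir iV by simp
  finally show ?thesis .
qed

lemma Bexp_nonneg:
  assumes "0 < t" "0 \<le> r" "0 \<le> V"
  shows "0 \<le> Bexp t r V P0 phi0 \<psi> R I f x"
  unfolding Bexp_def using assms
  by (intro add_nonneg_nonneg mult_nonneg_nonneg sum_nonneg) auto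



theorem lemmaS12:
  fixes P0 :: "'z::polish_space measure"
    and phi0 :: "'z \<Rightarrow> 'h::{real_inner,banach,second_countable_topology}"
    and phi :: "nat \<Rightarrow> nat \<Rightarrow> (nat \<Rightarrow> 'z) \<Rightarrow> 'z \<Rightarrow> 'h"
  assumes P0: "prob_space P0" "sets P0 = sets borel"
    and phi0_meas: "phi0 \<in> borel_measurable P0"
    and phi_meas: "\<And>m j. j \<in> {1,2} \<Longrightarrow>
          (\<lambda>(x, z). phi m j x z) \<in> borel_measurable ((PiM UNIV (\<lambda>_. P0)) \<Otimes>\<^sub>M P0)"
    and phi1_dep: "\<And>m x y. (\<forall>i<m. x i = y i) \<Longrightarrow> phi m 1 x = phi m 1 y"
    and phi2_dep: "\<And>m x y. (\<forall>i\<in>{m..<2*m}. x i = y i) \<Longrightarrow> phi m 2 x = phi m 2 y"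
    and phi0_L2: "L2norm P0 phi0 < \<infinity>"
    and consist: "\<And>j. j \<in> {1,2} \<Longrightarrow>
          op_one (PiM UNIV (\<lambda>_. P0)) (\<lambda>m x. L2norm P0 (\<lambda>z. phi m j x z - phi0 z))"
  shows "op_one (PiM UNIV (\<lambda>_. P0))
           (\<lambda>m x. ennreal (onorm (\<lambda>h. Sigma_n m phi x h - Sigma_0 P0 phi0 h)))"
proof -
  let ?P = "PiM (UNIV::nat set) (\<lambda>_. P0)"
  interpret P0: prob_space P0 by (rule P0(1))
  interpret P: prob_space ?P using P0(1) by (intro prob_space_PiM) auto
  have sp: "space P0 = UNIV" using sets_eq_imp_space_eq[OF P0(2)] by simp
  have spP: "space ?P = UNIV" by (simp add: space_PiM sp)
  have phi0m[measurable]: "phi0 \<in> borel_measurable P0" by (rule phi0_meas)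
  have n0fin: "(\<integral>\<^sup>+ z. ennreal ((norm (phi0 z))\<^sup>2) \<partial>P0) < \<infinity>"
    using phi0_L2 by (auto simp: L2norm_def Let_def top.not_eq_extremum split: if_splits)
  have Vint: "integrable P0 (\<lambda>z. (norm (phi0 z))\<^sup>2)"
    by (rule integrableI_bounded) (use n0fin in simp_all)
  define V where "V = integral\<^sup>L P0 (\<lambda>z. (norm (phi0 z))\<^sup>2)"
  have V0: "0 \<le> V" unfolding V_def by (rule Bochner_Integration.integral_nonneg) simp
  have Tint: "integrable P0 (\<lambda>z. inner h (phi0 z) *\<^sub>R phi0 z)" for h
  proof (rule Bochner_Integration.integrable_bound[where f="\<lambda>z. norm h * (norm (phi0 z))\<^sup>2"])
    show "integrable P0 (\<lambda>z. norm h * (norm (phi0 z))\<^sup>2)" using Vint by simp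
    show "(\<lambda>z. inner h (phi0 z) *\<^sub>R phi0 z) \<in> borel_measurable P0" by measurable
    show "AE z in P0. norm (inner h (phi0 z) *\<^sub>R phi0 z) \<le> norm (norm h * (norm (phi0 z))\<^sup>2)"
    proof (rule AE_I2)
      fix z
      have "norm (inner h (phi0 z) *\<^sub>R phi0 z) = \<bar>inner h (phi0 z)\<bar> * norm (phi0 z)" by simp
      also have "\<dots> \<le> norm h * norm (phi0 z) * norm (phi0 z)"
        by (intro mult_right_mono Cauchy_Schwarz_ineq2) auto
      finally show "norm (inner h (phi0 z) *\<^sub>R phi0 z) \<le> norm (norm h * (norm (phi0 z))\<^sup>2)"
        by (simp add: power2_eq_square mult.assoc)
    qed
  qed
  have phiP: "(\<lambda>p. phi m j (fst p) (snd p)) \<in> borel_measurable (?P \<Otimes>\<^sub>M P0)" if "j \<in> {1,2}" for m j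
    using phi_meas[OF that, of m] by (simp add: case_prod_beta')
  have phim: "(\<lambda>x. phi m j x (x i)) \<in> borel_measurable ?P" if "j \<in> {1,2}" for m j i
  proof -
    have "(\<lambda>p. phi m j (fst p) (snd p)) \<circ> (\<lambda>x. (x, x i)) \<in> borel_measurable ?P"
      by (rule measurable_comp[OF _ phiP[OF that]]) measurable
    thus ?thesis by (simp add: comp_def)
  qed
  have Nm: "(\<lambda>x. \<integral>\<^sup>+ z. ennreal ((norm (phi m j x z - phi0 z))\<^sup>2) \<partial>P0) \<in> borel_measurable ?P"
    if "j \<in> {1,2}" for m j
  proof -
    note phiP[OF that, of m, measurable]
    have "(\<lambda>p. ennreal ((norm (phi m j (fst p) (snd p) - phi0 (snd p)))\<^sup>2)) \<in> borel_measurable (?P \<Otimes>\<^sub>M P0)"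
      by measurable
    from P0.borel_measurable_nn_integral_fst[OF this] show ?thesis by simp
  qed
  show ?thesis unfolding op_one_def
  proof (intro allI impI)
    fix e :: real assume e: "0 < e"
    show "(\<lambda>m. outer_prob ?P {x\<in>space ?P. ennreal e < ennreal (onorm (\<lambda>h. Sigma_n m phi x h - Sigma_0 P0 phi0 h))}) \<longlonglongrightarrow> 0"
    proof (rule tendsto_small)
      show "0 \<le> outer_prob ?P {x\<in>space ?P. ennreal e < ennreal (onorm (\<lambda>h. Sigma_n m phi x h - Sigma_0 P0 phi0 h))}" for m
        by (rule outer_prob_nonneg) auto
      fix \<eta> :: real assume eta: "0 < \<eta>"
      define K where "K = 16 * (V + 1) / \<eta>"
      have K: "0 < K" using V0 eta by (simp add: K_def)
      define t where "t = e / (4 * (2 * K + V + 1))"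
      have t: "0 < t" using e K V0 by (simp add: t_def)
      define a where "a = 1 + 1 / t"
      have a: "1 \<le> a" using t by (simp add: a_def)
      define cD where "cD = e / (6 * a)"
      have cD: "0 < cD" using e a by (simp add: cD_def)
      obtain \<psi> where psi: "simple_function P0 \<psi>" and rint: "integrable P0 (\<lambda>z. (norm (\<psi> z - phi0 z))\<^sup>2)"
        and rlt: "integral\<^sup>L P0 (\<lambda>z. (norm (\<psi> z - phi0 z))\<^sup>2) < min cD (cD * \<eta> / 16)"
        using simple_L2_approx[OF P0.finite_measure_axioms phi0m Vint, of "min cD (cD * \<eta> / 16)"] cD eta by auto
      define r where "r = integral\<^sup>L P0 (\<lambda>z. (norm (\<psi> z - phi0 z))\<^sup>2)"
      have r0: "0 \<le> r" unfolding r_def by (rule Bochner_Integration.integral_nonneg) simp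
      have rc1: "r \<le> cD" using rlt by (simp add: r_def)
      have rc2: "r / cD \<le> \<eta> / 16"
      proof -
        have "r < cD * \<eta> / 16" using rlt by (simp add: r_def)
        thus ?thesis using cD by (simp add: divide_le_eq field_simps)
      qed
      define R where "R = range \<psi>"
      have Rfin: "finite R" using simple_functionD(1)[OF psi] sp by (simp add: R_def)
      have Rne: "R \<noteq> {}" by (simp add: R_def)
      have cR: "0 < card R" using Rfin Rne by (simp add: card_gt_0_iff)
      have psim[measurable]: "\<psi> \<in> borel_measurable P0" using psi by (rule borel_measurable_simple_function)
      have Av[measurable]: "\<psi> -` {v} \<in> sets P0" for v using simple_functionD(2)[OF psi, of "{v}"] sp by simp
      define \<eta>v where "\<eta>v v = e / (4 * real (card R) * ((norm v)\<^sup>2 + 1))" for v :: 'h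
      have \<eta>vpos: "0 < \<eta>v v" for v
        unfolding \<eta>v_def using e cR by (intro divide_pos_pos mult_pos_pos) (auto simp: add_nonneg_pos)
      have sum\<eta>: "(\<Sum>v\<in>R. \<eta>v v * (norm v)\<^sup>2) \<le> e / 4"
      proof -
        have "(\<Sum>v\<in>R. \<eta>v v * (norm v)\<^sup>2) \<le> (\<Sum>v\<in>R. e / (4 * real (card R)))"
        proof (rule sum_mono)
          fix v
          have "\<eta>v v * (norm v)\<^sup>2 = (e / (4 * real (card R))) * ((norm v)\<^sup>2 / ((norm v)\<^sup>2 + 1))"
            by (simp add: \<eta>v_def)
          also have "\<dots> \<le> (e / (4 * real (card R))) * 1"
          proof (rule mult_left_mono)
            have d: "0 < (norm v)\<^sup>2 + 1" by (simp add: add_nonneg_pos)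
            show "(norm v)\<^sup>2 / ((norm v)\<^sup>2 + 1) \<le> 1" by (simp add: pos_divide_le_eq[OF d])
          qed (use e cR in auto)
          finally show "\<eta>v v * (norm v)\<^sup>2 \<le> e / (4 * real (card R))" by simp
        qed
        also have "\<dots> = e / 4" using cR by simp
        finally show ?thesis .
      qed
      have etot: "a * (2 * cD + r) + t * (2 * K + V) + (\<Sum>v\<in>R. \<eta>v v * (norm v)\<^sup>2) \<le> e"
      proof -
        have "a * (2 * cD + r) \<le> a * (3 * cD)" using rc1 a by (intro mult_left_mono) auto
        also have "\<dots> = e / 2" using a by (simp add: cD_def)
        finally have 1: "a * (2 * cD + r) \<le> e / 2" .
        have "t * (2 * K + V) = e / 4 * ((2 * K + V) / (2 * K + V + 1))"
          using K V0 by (simp add: t_def)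
        also have "\<dots> \<le> e / 4 * 1" using e K V0 by (intro mult_left_mono) auto
        finally have 2: "t * (2 * K + V) \<le> e / 4" by simp
        show ?thesis using 1 2 sum\<eta> by linarith
      qed
      define \<delta> where "\<delta> = cD * \<eta> / 32"
      have \<delta>: "0 < \<delta>" using cD eta by (simp add: \<delta>_def)
      have cons: "(\<lambda>m. measure ?P {x\<in>space ?P. ennreal \<delta> < (\<integral>\<^sup>+ z. ennreal ((norm (phi m j x z - phi0 z))\<^sup>2) \<partial>P0)}) \<longlonglongrightarrow> 0"
        if j: "j \<in> {1,2}" for j
      proof -
        have "(\<lambda>m. outer_prob ?P {x\<in>space ?P. ennreal (sqrt \<delta>) < L2norm P0 (\<lambda>z. phi m j x z - phi0 z)}) \<longlonglongrightarrow> 0"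
          using consist[OF j] \<delta> unfolding op_one_def by auto
        moreover have "{x\<in>space ?P. ennreal (sqrt \<delta>) < L2norm P0 (\<lambda>z. phi m j x z - phi0 z)}
            = {x\<in>space ?P. ennreal \<delta> < (\<integral>\<^sup>+ z. ennreal ((norm (phi m j x z - phi0 z))\<^sup>2) \<partial>P0)}" for m
          using \<delta> by (simp add: L2_lt)
        moreover have "outer_prob ?P {x\<in>space ?P. ennreal \<delta> < (\<integral>\<^sup>+ z. ennreal ((norm (phi m j x z - phi0 z))\<^sup>2) \<partial>P0)}
            = measure ?P {x\<in>space ?P. ennreal \<delta> < (\<integral>\<^sup>+ z. ennreal ((norm (phi m j x z - phi0 z))\<^sup>2) \<partial>P0)}" for m
        proof (rule outer_prob_eq[OF P.finite_measure_axioms])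
          note Nm[OF j, of m, measurable]
          show "{x\<in>space ?P. ennreal \<delta> < (\<integral>\<^sup>+ z. ennreal ((norm (phi m j x z - phi0 z))\<^sup>2) \<partial>P0)} \<in> sets ?P"
            by measurable
        qed
        ultimately show ?thesis by simp
      qed
      have ev: "eventually (\<lambda>m. measure ?P {x\<in>space ?P. ennreal \<delta> < (\<integral>\<^sup>+ z. ennreal ((norm (phi m j x z - phi0 z))\<^sup>2) \<partial>P0)} \<le> \<eta> / 32) sequentially"
        if "j \<in> {1,2}" for j
        using order_tendstoD(2)[OF cons[OF that], of "\<eta> / 32"] eta by (auto elim: eventually_mono)
      define C where "C = (\<Sum>v\<in>R. 1 / (\<eta>v v)\<^sup>2)"
      have evC: "eventually (\<lambda>m. C / real m \<le> \<eta> / 16) sequentially"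
        using order_tendstoD(2)[OF lim_const_over_n[of C], of "\<eta> / 16"] eta by (auto elim: eventually_mono)
      have ev1: "eventually (\<lambda>m. (1::nat) \<le> m) sequentially" by (rule eventually_ge_at_top)
      show "eventually (\<lambda>m. outer_prob ?P {x\<in>space ?P. ennreal e < ennreal (onorm (\<lambda>h. Sigma_n m phi x h - Sigma_0 P0 phi0 h))} \<le> \<eta>) sequentially"
        using ev[of 1, OF insertI1] ev[of 2, OF insertI2[OF insertI1]] evC ev1
      proof eventually_elim
        case (elim m)
        have m: "1 \<le> m" using elim by simp
        define I1 where "I1 = {m..<2*m}"
        define I2 where "I2 = {0..<m}"
        have I1: "finite I1" "I1 \<noteq> {}" "I1 \<inter> {..<m} = {}" "card I1 = m" using m by (auto simp: I1_def)
        have I2: "finite I2" "I2 \<noteq> {}" "I2 \<inter> {m..<2*m} = {}" "card I2 = m" using m by (auto simp: I2_def)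
        have dep1: "\<And>x y. (\<forall>k\<in>{..<m}. x k = y k) \<Longrightarrow> phi m 1 x = phi m 1 y" using phi1_dep by auto
        have dep2: "\<And>x y. (\<forall>k\<in>{m..<2*m}. x k = y k) \<Longrightarrow> phi m 2 x = phi m 2 y" using phi2_dep by auto
        have pm1: "(\<lambda>(x, z). phi m 1 x z) \<in> borel_measurable (?P \<Otimes>\<^sub>M P0)" using phi_meas by simp
        have pm2: "(\<lambda>(x, z). phi m 2 x z) \<in> borel_measurable (?P \<Otimes>\<^sub>M P0)" using phi_meas by simp
        have pm1i: "\<And>i. (\<lambda>x. phi m 1 x (x i)) \<in> borel_measurable ?P" using phim by simp
        have pm2i: "\<And>i. (\<lambda>x. phi m 2 x (x i)) \<in> borel_measurable ?P" using phim by simp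
        define etot where "etot = a * (2 * cD + r) + t * (2 * K + V) + (\<Sum>v\<in>R. \<eta>v v * (norm v)\<^sup>2)"
        define B1 where "B1 x = Bexp t r V P0 phi0 \<psi> R I1 (phi m 1 x) x" for x
        define B2 where "B2 x = Bexp t r V P0 phi0 \<psi> R I2 (phi m 2 x) x" for x
        have B1m[measurable]: "B1 \<in> borel_measurable ?P"
          unfolding B1_def by (rule Bexp_meas[where F="phi m 1", OF pm1i phi0m psim Av])
        have B2m[measurable]: "B2 \<in> borel_measurable ?P"
          unfolding B2_def by (rule Bexp_meas[where F="phi m 2", OF pm2i phi0m psim Av])
        have sumC: "(\<Sum>v\<in>R. 1 / (real m * (\<eta>v v)\<^sup>2)) = C / real m"
          unfolding C_def by (simp add: sum_divide_distrib mult.commute)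
        have VK: "V / K \<le> \<eta> / 16"
        proof -
          have "V / K = \<eta> / 16 * (V / (V + 1))" using eta V0 by (simp add: K_def)
          also have "\<dots> \<le> \<eta> / 16 * 1" using eta V0 by (intro mult_left_mono) auto
          finally show ?thesis by simp
        qed
        have dc: "\<delta> / cD = \<eta> / 32" using cD by (simp add: \<delta>_def)
        have hp1: "measure ?P {x\<in>space ?P. etot < B1 x} \<le>
            measure ?P {x\<in>space ?P. ennreal \<delta> < (\<integral>\<^sup>+ z. ennreal ((norm (phi m 1 x z - phi0 z))\<^sup>2) \<partial>P0)}
            + \<delta> / cD + r / cD + V / K + (\<Sum>v\<in>R. 1 / (real (card I1) * (\<eta>v v)\<^sup>2))"
          unfolding etot_def B1_def a_def
          by (rule half_prob[OF P0(1) sp I1(1) I1(2) I1(3) pm1 dep1 phi0m Vint V_def[symmetric] psi R_def rint r_def[symmetric] t cD \<delta> K \<eta>vpos])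
        have hp2: "measure ?P {x\<in>space ?P. etot < B2 x} \<le>
            measure ?P {x\<in>space ?P. ennreal \<delta> < (\<integral>\<^sup>+ z. ennreal ((norm (phi m 2 x z - phi0 z))\<^sup>2) \<partial>P0)}
            + \<delta> / cD + r / cD + V / K + (\<Sum>v\<in>R. 1 / (real (card I2) * (\<eta>v v)\<^sup>2))"
          unfolding etot_def B2_def a_def
          by (rule half_prob[OF P0(1) sp I2(1) I2(2) I2(3) pm2 dep2 phi0m Vint V_def[symmetric] psi R_def rint r_def[symmetric] t cD \<delta> K \<eta>vpos])
        have bd1: "measure ?P {x\<in>space ?P. etot < B1 x} \<le> \<eta> / 4"
          using hp1 elim(1) dc rc2 VK elim(3) sumC I1(4) by simp
        have bd2: "measure ?P {x\<in>space ?P. etot < B2 x} \<le> \<eta> / 4"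
          using hp2 elim(2) dc rc2 VK elim(3) sumC I2(4) by simp
        have B1nn: "0 \<le> B1 x" for x unfolding B1_def by (rule Bexp_nonneg[OF t r0 V0])
        have B2nn: "0 \<le> B2 x" for x unfolding B2_def by (rule Bexp_nonneg[OF t r0 V0])
        have det: "onorm (\<lambda>h. Sigma_n m phi x h - Sigma_0 P0 phi0 h) \<le> (B1 x + B2 x) / 2" for x
        proof (rule onorm_bound)
          show "0 \<le> (B1 x + B2 x) / 2" using B1nn[of x] B2nn[of x] by simp
          fix h
          define E\<psi> where "E\<psi> = integral\<^sup>L P0 (\<lambda>z. inner h (\<psi> z) *\<^sub>R \<psi> z)"
          define S0 where "S0 = Sigma_0 P0 phi0 h"
          have S0eq: "S0 = integral\<^sup>L P0 (\<lambda>z. inner h (phi0 z) *\<^sub>R phi0 z)" by (simp add: S0_def Sigma_0_def)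
          have E1: "E\<psi> = (\<Sum>v\<in>R. measure P0 (\<psi> -` {v}) *\<^sub>R (inner h v *\<^sub>R v))"
            using psi_E1(2)[OF P0.finite_measure_axioms sp psi, of h] by (simp add: E\<psi>_def R_def)
          have E2: "norm (E\<psi> - S0) \<le> norm h * ((1 + 1/t) * r + t * V)"
            unfolding E\<psi>_def S0eq
            by (rule psi_E2[OF t psi_E1(1)[OF P0.finite_measure_axioms sp psi] Tint rint r_def[symmetric] Vint V_def[symmetric]])
          have b1: "norm ((1 / real (card I1)) *\<^sub>R (\<Sum>i\<in>I1. inner h (phi m 1 x (x i)) *\<^sub>R phi m 1 x (x i)) - S0) \<le> norm h * B1 x"
            unfolding B1_def Bexp_def by (rule emp_bound[OF I1(1) I1(2) t Rfin _ E1 E2]) (simp add: R_def)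
          have b2: "norm ((1 / real (card I2)) *\<^sub>R (\<Sum>i\<in>I2. inner h (phi m 2 x (x i)) *\<^sub>R phi m 2 x (x i)) - S0) \<le> norm h * B2 x"
            unfolding B2_def Bexp_def by (rule emp_bound[OF I2(1) I2(2) t Rfin _ E1 E2]) (simp add: R_def)
          have split: "Sigma_n m phi x h - S0 =
              (1/2) *\<^sub>R ((1 / real (card I1)) *\<^sub>R (\<Sum>i\<in>I1. inner h (phi m 1 x (x i)) *\<^sub>R phi m 1 x (x i)) - S0)
            + (1/2) *\<^sub>R ((1 / real (card I2)) *\<^sub>R (\<Sum>i\<in>I2. inner h (phi m 2 x (x i)) *\<^sub>R phi m 2 x (x i)) - S0)"
          proof -
            have hh: "(1/2::real) *\<^sub>R S0 + (1/2) *\<^sub>R S0 = S0"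
              by (subst scaleR_add_left[symmetric]) simp
            show ?thesis
              unfolding Sigma_n_def I1(4) I2(4) unfolding I1_def I2_def by (simp add: algebra_simps hh)
          qed
          have "norm (Sigma_n m phi x h - S0) \<le>
              (1/2) * norm ((1 / real (card I1)) *\<^sub>R (\<Sum>i\<in>I1. inner h (phi m 1 x (x i)) *\<^sub>R phi m 1 x (x i)) - S0)
            + (1/2) * norm ((1 / real (card I2)) *\<^sub>R (\<Sum>i\<in>I2. inner h (phi m 2 x (x i)) *\<^sub>R phi m 2 x (x i)) - S0)"
            unfolding split by (rule order_trans[OF norm_triangle_ineq]) simp
          also have "\<dots> \<le> (1/2) * (norm h * B1 x) + (1/2) * (norm h * B2 x)"
            using b1 b2 by linarith
          finally show "norm (Sigma_n m phi x h - Sigma_0 P0 phi0 h) \<le> (B1 x + B2 x) / 2 * norm h"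
            by (simp add: S0_def algebra_simps)
        qed
        have incl: "{x\<in>space ?P. ennreal e < ennreal (onorm (\<lambda>h. Sigma_n m phi x h - Sigma_0 P0 phi0 h))}
            \<subseteq> {x\<in>space ?P. etot < B1 x} \<union> {x\<in>space ?P. etot < B2 x}"
        proof
          fix x assume x: "x \<in> {x\<in>space ?P. ennreal e < ennreal (onorm (\<lambda>h. Sigma_n m phi x h - Sigma_0 P0 phi0 h))}"
          hence lt: "e < onorm (\<lambda>h. Sigma_n m phi x h - Sigma_0 P0 phi0 h)"
            using e by (simp add: ennreal_less_iff)
          show "x \<in> {x\<in>space ?P. etot < B1 x} \<union> {x\<in>space ?P. etot < B2 x}"
          proof (rule ccontr)
            assume "\<not> ?thesis"
            hence b1e: "B1 x \<le> etot" and b2e: "B2 x \<le> etot" using spP by auto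
            have ee: "etot \<le> e" using etot by (simp add: etot_def)
            have "B1 x + B2 x \<le> e + e" using order_trans[OF b1e ee] order_trans[OF b2e ee] by (rule add_mono)
            hence "(B1 x + B2 x) / 2 \<le> e" by (simp add: field_simps)
            thus False using det[of x] lt by linarith
          qed
        qed
        have "outer_prob ?P {x\<in>space ?P. ennreal e < ennreal (onorm (\<lambda>h. Sigma_n m phi x h - Sigma_0 P0 phi0 h))}
            \<le> measure ?P ({x\<in>space ?P. etot < B1 x} \<union> {x\<in>space ?P. etot < B2 x})"
          by (rule outer_prob_le[OF _ incl]) measurable
        also have "\<dots> \<le> measure ?P {x\<in>space ?P. etot < B1 x} + measure ?P {x\<in>space ?P. etot < B2 x}"
          by (rule measure_Un_le) measurable
        also have "\<dots> \<le> \<eta>" using bd1 bd2 eta by linarith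
        finally show ?case .
      qed
    qed
  qed
qed


end
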